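(* The frequency ranking is stable for $r\ge 761$: for all integers $r,r'\ge 761$ and all hand types $h,h'\in\{\mathrm{HC},\mathrm{1P},\mathrm{2P},\mathrm{3X},\mathrm{ST},\mathrm{FL},\mathrm{FH},\mathrm{4X},\mathrm{SF}\}$, one has $freq_r(h)<freq_r(h')$ if and only if $freq_{r'}(h)<freq_{r'}(h')$.
   Context: Fix an integer $r\ge 5$. The deck has $4r$ cards: each card has one of $4$ suits and one of $r$ ranks $1,\dots,r$, each (suit, rank) pair occurring exactly once; rank $r$ plays the role of the ace. Let $S_r$ be the set of $7$-card subsets of the deck. Hand types of a $5$-card set: HC (high card): every $5$-card set; 1P: two cards of equal rank; 2P: two cards of rank $a$ and two cards of a rank $b\ne a$, or four cards of one rank (four of a kind is considered to contain two pair); 3X: three cards of equal rank; ST (straight): the five ranks form one of the sets $\{k,k+1,k+2,k+3,k+4\}$ with $1\le k\le r-4$, or $\{r,1,2,3,4\}$ (ace low); FL (flush): all five cards of the same suit; FH (full house): three cards of rank $a$ and two cards of a rank $b\ne a$; 4X: four cards of equal rank; SF (straight flush): both a straight and a flush. Types are counted inclusively. For $s\in S_r$ write $h\in s$ if some $5$-card subset of $s$ is of type $h$, and set $freq_r(h)=|\{s\in S_r: h\in s\}|$. The frequency ranking for $r$ places $h_0$ above $h_1$ exactly when $freq_r(h_0)<freq_r(h_1)$. *)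

theory Defs
  imports Main
begin

text \<open>A card is a pair (suit, rank) with suit in {0..3} (four suits) and rank in {1..r};
  rank r plays the role of the ace.\<close>
type_synonym card = "nat \<times> nat"

definition suit :: "card \<Rightarrow> nat" where "suit c = fst c"
definition rank :: "card \<Rightarrow> nat" where "rank c = snd c"

definition deck :: "nat \<Rightarrow> card set" where
  "deck r = {0..<4} \<times> {1..r}"

definition seven_sets :: "nat \<Rightarrow> card set set" where
  "seven_sets r = {s. s \<subseteq> deck r \<and> card s = 7}"

datatype hand_type = HC | OneP | TwoP | ThreeX | ST | FL | FH | FourX | SF

definition has_n_of_rank :: "nat \<Rightarrow> nat \<Rightarrow> card set \<Rightarrow> bool" where
  "has_n_of_rank n a h = (card {c \<in> h. rank c = a} \<ge> n)"

definition is_straight :: "nat \<Rightarrow> card set \<Rightarrow> bool" where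
  "is_straight r h =
     ((\<exists>k. 1 \<le> k \<and> k + 4 \<le> r \<and> rank ` h = {k..k+4}) \<or> rank ` h = {r,1,2,3,4})"

definition is_flush :: "card set \<Rightarrow> bool" where
  "is_flush h = (\<forall>c\<in>h. \<forall>d\<in>h. suit c = suit d)"

text \<open>Whether a 5-card set h is of hand type t (types counted inclusively).\<close>
fun of_type :: "nat \<Rightarrow> hand_type \<Rightarrow> card set \<Rightarrow> bool" where
  "of_type r HC h = True"
| "of_type r OneP h = (\<exists>a. has_n_of_rank 2 a h)"
| "of_type r TwoP h = ((\<exists>a b. a \<noteq> b \<and> has_n_of_rank 2 a h \<and> has_n_of_rank 2 b h)
                      \<or> (\<exists>a. has_n_of_rank 4 a h))"
| "of_type r ThreeX h = (\<exists>a. has_n_of_rank 3 a h)"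
| "of_type r ST h = is_straight r h"
| "of_type r FL h = is_flush h"
| "of_type r FH h = (\<exists>a b. a \<noteq> b \<and> has_n_of_rank 3 a h \<and> has_n_of_rank 2 b h)"
| "of_type r FourX h = (\<exists>a. has_n_of_rank 4 a h)"
| "of_type r SF h = (is_straight r h \<and> is_flush h)"

definition contains_type :: "nat \<Rightarrow> hand_type \<Rightarrow> card set \<Rightarrow> bool" where
  "contains_type r t s = (\<exists>h. h \<subseteq> s \<and> card h = 5 \<and> of_type r t h)"

definition freq :: "nat \<Rightarrow> hand_type \<Rightarrow> nat" where
  "freq r t = card {s \<in> seven_sets r. contains_type r t s}"

end

theory Submission
  imports Defs Complex_Main "HOL-Library.FuncSet"
begin

lemma fin_deck[simp]: "finite (deck r)" by (simp add: deck_def)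
lemma card_deck: "card (deck r) = 4*r" by (simp add: deck_def card_cartesian_product)

lemma seven_setsD: assumes "s \<in> seven_sets r" shows "s \<subseteq> deck r" "finite s" "card s = 7"
  using assms finite_subset[OF _ fin_deck] unfolding seven_sets_def by auto

lemma fin_seven[simp]: "finite (seven_sets r)"
  by (rule finite_subset[of _ "Pow (deck r)"]) (auto simp: seven_sets_def)

lemma fin_seven_P[simp]: "finite {s \<in> seven_sets r. P s}" by simp

lemma card_subsets_eq: "finite A \<Longrightarrow> card A = m \<Longrightarrow> card {B. B \<subseteq> A \<and> card B = k} = m choose k"
  using n_subsets by blast

lemma c4[simp]: "(4::nat) choose 1 = 4" "(4::nat) choose 2 = 6" "(4::nat) choose 3 = 4" "(4::nat) choose 4 = 1"
  by (simp_all add: numeral_eq_Suc)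

lemma card_rank_cards: "card ({0..<4::nat} \<times> {a::nat}) = 4" by (simp add: card_cartesian_product)

lemma kind_upper:
  assumes n1: "1 \<le> n" and n5: "n \<le> 5"
  shows "card {s \<in> seven_sets r. \<exists>h. h \<subseteq> s \<and> card h = 5 \<and> (\<exists>a. has_n_of_rank n a h)}
           \<le> r * ((4 choose n) * (4*r choose (7-n)))"
proof -
  let ?D = "Sigma {1..r} (\<lambda>a. {T. T \<subseteq> {0..<4::nat}\<times>{a} \<and> card T = n} \<times> {U. U \<subseteq> deck r \<and> card U = 7 - n})"
  let ?f = "\<lambda>(a::nat,T::card set,U). T \<union> U"
  have sub: "{s \<in> seven_sets r. \<exists>h. h \<subseteq> s \<and> card h = 5 \<and> (\<exists>a. has_n_of_rank n a h)} \<subseteq> ?f ` ?D"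
  proof
    fix s assume "s \<in> {s \<in> seven_sets r. \<exists>h. h \<subseteq> s \<and> card h = 5 \<and> (\<exists>a. has_n_of_rank n a h)}"
    then obtain h a where s7: "s \<in> seven_sets r" and hs: "h \<subseteq> s" "card h = 5" and ha: "has_n_of_rank n a h" by blast
    note fs = seven_setsD[OF s7]
    have "n \<le> card {c \<in> h. rank c = a}" using ha by (simp add: has_n_of_rank_def)
    then obtain T where T: "T \<subseteq> {c \<in> h. rank c = a}" "card T = n" by (meson obtain_subset_with_card_n)
    have Ts: "T \<subseteq> s" using T hs by auto
    have Tq: "T \<subseteq> {0..<4::nat}\<times>{a}"
    proof
      fix c assume "c \<in> T"
      then have "c \<in> deck r" "snd c = a" using Ts fs T by (auto simp: rank_def)
      then show "c \<in> {0..<4::nat}\<times>{a}" by (cases c) (auto simp: deck_def)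
    qed
    have "T \<noteq> {}" using T n1 by auto
    then obtain c where "c \<in> T" by blast
    then have "c \<in> deck r" "snd c = a" using Ts fs T by (auto simp: rank_def)
    then have a: "a \<in> {1..r}" by (auto simp: deck_def)
    have U: "s - T \<subseteq> deck r" "card (s - T) = 7 - n"
      using fs Ts T by (auto simp: card_Diff_subset finite_subset)
    have "s = ?f (a, T, s - T)" using Ts by auto
    moreover have "(a, T, s - T) \<in> ?D" using a Tq T U by auto
    ultimately show "s \<in> ?f ` ?D" by blast
  qed
  have cD: "card ?D = r * ((4 choose n) * (4*r choose (7-n)))"
  proof -
    have "card ?D = (\<Sum>a\<in>{1..r}. card ({T. T \<subseteq> {0..<4::nat}\<times>{a} \<and> card T = n} \<times> {U. U \<subseteq> deck r \<and> card U = 7 - n}))"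
      by (rule card_SigmaI) auto
    also have "\<dots> = (\<Sum>a\<in>{1..r}. (4 choose n) * (4*r choose (7-n)))"
      by (intro sum.cong refl) (simp add: card_cartesian_product card_subsets_eq card_rank_cards card_deck)
    finally show ?thesis by simp
  qed
  have "finite ?D" by auto
  then show ?thesis using sub cD card_image_le card_mono by (metis (no_types, lifting) finite_imageI order_trans)
qed

definition Q :: "nat \<Rightarrow> card set" where "Q a = {0..<4::nat} \<times> {a}"

lemma Q_sub_deck: "a \<in> {1..r} \<Longrightarrow> Q a \<subseteq> deck r" by (auto simp: Q_def deck_def)
lemma card_Q[simp]: "card (Q a) = 4" by (simp add: Q_def card_cartesian_product)
lemma fin_Q[simp]: "finite (Q a)" by (simp add: Q_def)
lemma Q_iff: "c \<in> Q a \<longleftrightarrow> fst c < 4 \<and> snd c = a" by (cases c) (auto simp: Q_def)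

lemma fourx_lower: "r * ((4*r - 4) choose 3) \<le> freq r FourX"
proof -
  let ?D = "Sigma {1..r} (\<lambda>a. {U. U \<subseteq> deck r - Q a \<and> card U = 3})"
  let ?f = "\<lambda>(a::nat,U::card set). Q a \<union> U"
  have img: "?f ` ?D \<subseteq> {s \<in> seven_sets r. contains_type r FourX s}"
  proof
    fix s assume "s \<in> ?f ` ?D"
    then obtain a U where a: "a \<in> {1..r}" and U: "U \<subseteq> deck r - Q a" "card U = 3" and s: "s = Q a \<union> U" by auto
    have fU: "finite U" using U(1) by (metis finite_Diff fin_deck finite_subset)
    have "Q a \<inter> U = {}" using U by auto
    then have cs: "card s = 7" using U fU by (simp add: s card_Un_disjoint)
    have sd: "s \<subseteq> deck r" using s U Q_sub_deck[OF a] by auto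
    obtain u where u: "u \<in> U" using U(2) by (metis card.empty ex_in_conv zero_neq_numeral)
    let ?h = "insert u (Q a)"
    have uQ: "u \<notin> Q a" using u U by auto
    have ch: "card ?h = 5" using uQ by simp
    have "Q a \<subseteq> {c \<in> ?h. rank c = a}" by (auto simp: Q_iff rank_def)
    then have "4 \<le> card {c \<in> ?h. rank c = a}" using card_mono[of "{c \<in> ?h. rank c = a}" "Q a"] by simp
    then have "contains_type r FourX s" unfolding contains_type_def
      using ch u s by (intro exI[of _ ?h]) (auto simp: has_n_of_rank_def)
    then show "s \<in> {s \<in> seven_sets r. contains_type r FourX s}" using sd cs by (simp add: seven_sets_def)
  qed
  have inj: "inj_on ?f ?D"
  proof (rule inj_onI)
    fix x y assume x: "x \<in> ?D" and y: "y \<in> ?D" and e: "?f x = ?f y"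
    obtain a U where xa: "x = (a,U)" and a: "a \<in> {1..r}" and U: "U \<subseteq> deck r - Q a" "card U = 3" using x by auto
    obtain b V where yb: "y = (b,V)" and b: "b \<in> {1..r}" and V: "V \<subseteq> deck r - Q b" "card V = 3" using y by auto
    have e2: "Q a \<union> U = Q b \<union> V" using e xa yb by simp
    have "a = b"
    proof (rule ccontr)
      assume "a \<noteq> b"
      then have "Q a \<inter> Q b = {}" by (auto simp: Q_iff)
      then have "Q a \<subseteq> V" using e2 by blast
      then have "card (Q a) \<le> card V" using V(1) by (intro card_mono) (auto intro: finite_subset)
      then show False using V by simp
    qed
    moreover have "U = V" using e2 U V \<open>a = b\<close> by blast
    ultimately show "x = y" using xa yb by simp
  qed
  have cD: "card ?D = r * ((4*r - 4) choose 3)"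
  proof -
    have "card ?D = (\<Sum>a\<in>{1..r}. card {U. U \<subseteq> deck r - Q a \<and> card U = 3})"
      by (rule card_SigmaI) auto
    also have "\<dots> = (\<Sum>a\<in>{1..r}. ((4*r - 4) choose 3))"
      by (intro sum.cong refl card_subsets_eq) (auto simp: card_Diff_subset Q_sub_deck card_deck)
    finally show ?thesis by simp
  qed
  show ?thesis unfolding freq_def using card_mono[OF _ img] card_image[OF inj] cD by simp
qed

definition DR :: "nat set \<Rightarrow> nat \<Rightarrow> card set set" where
  "DR Y k = {E. E \<subseteq> {0..<4::nat} \<times> Y \<and> card E = k \<and> inj_on snd E}"

lemma card_DR: assumes fY: "finite Y" shows "(card Y choose k) * 4^k \<le> card (DR Y k)"
proof -
  let ?D = "Sigma {R. R \<subseteq> Y \<and> card R = k} (\<lambda>R. PiE R (\<lambda>_. {0..<4::nat}))"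
  let ?g = "\<lambda>(R, f). (\<lambda>x. (f x, x)) ` R"
  have img: "?g ` ?D \<subseteq> DR Y k"
  proof
    fix E assume "E \<in> ?g ` ?D"
    then obtain R f where R: "R \<subseteq> Y" "card R = k" and f: "f \<in> PiE R (\<lambda>_. {0..<4::nat})" and E: "E = (\<lambda>x. (f x, x)) ` R" by auto
    have "inj_on (\<lambda>x. (f x, x)) R" by (auto intro: inj_onI)
    then have "card E = k" using E R card_image by metis
    moreover have "E \<subseteq> {0..<4::nat} \<times> Y" using E R f by auto
    moreover have "inj_on snd E" using E by (auto intro: inj_onI)
    ultimately show "E \<in> DR Y k" by (simp add: DR_def)
  qed
  have inj: "inj_on ?g ?D"
  proof (rule inj_onI)
    fix x y assume x: "x \<in> ?D" and y: "y \<in> ?D" and e: "?g x = ?g y"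
    obtain R f where xa: "x = (R,f)" and f: "f \<in> PiE R (\<lambda>_. {0..<4::nat})" using x by auto
    obtain R' f' where yb: "y = (R',f')" and f': "f' \<in> PiE R' (\<lambda>_. {0..<4::nat})" using y by auto
    have e2: "(\<lambda>x. (f x, x)) ` R = (\<lambda>x. (f' x, x)) ` R'" using e xa yb by simp
    have "snd ` ((\<lambda>x. (f x, x)) ` R) = R" by (simp add: image_image)
    moreover have "snd ` ((\<lambda>x. (f' x, x)) ` R') = R'" by (simp add: image_image)
    ultimately have RR: "R = R'" using e2 by simp
    have "\<forall>z\<in>R. f z = f' z"
    proof
      fix z assume "z \<in> R"
      then have "(f z, z) \<in> (\<lambda>x. (f' x, x)) ` R'" using e2 by blast
      then show "f z = f' z" by auto
    qed
    then have "f = f'" using f f' RR by (intro PiE_ext) auto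
    then show "x = y" using xa yb RR by simp
  qed
  have cD: "card ?D = (card Y choose k) * 4^k"
  proof -
    have "card ?D = (\<Sum>R\<in>{R. R \<subseteq> Y \<and> card R = k}. card (PiE R (\<lambda>_. {0..<4::nat})))"
      using fY by (intro card_SigmaI) (auto intro: finite_PiE finite_subset)
    also have "\<dots> = (\<Sum>R\<in>{R. R \<subseteq> Y \<and> card R = k}. 4^k)"
      using fY by (intro sum.cong refl) (auto simp: card_PiE finite_subset)
    also have "\<dots> = (card Y choose k) * 4^k" using n_subsets[OF fY] by simp
    finally show ?thesis .
  qed
  have "finite (DR Y k)" using fY unfolding DR_def by (auto intro: finite_subset)
  then show ?thesis using card_mono[OF _ img] card_image[OF inj] cD by simp
qed

lemma DR_D: assumes "E \<in> DR Y k" and "finite Y"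
  shows "E \<subseteq> {0..<4::nat} \<times> Y" "card E = k" "inj_on snd E" "finite E"
proof -
  show e: "E \<subseteq> {0..<4::nat} \<times> Y" "card E = k" "inj_on snd E" using assms(1) by (auto simp: DR_def)
  show "finite E" by (rule finite_subset[OF e(1)]) (simp add: assms(2))
qed

lemma DR_le1: assumes "E \<in> DR Y k" "finite Y" shows "card {c\<in>E. snd c = x} \<le> 1"
proof -
  have "finite {c\<in>E. snd c = x}" using DR_D[OF assms] by auto
  moreover have "\<forall>a1\<in>{c\<in>E. snd c = x}. \<forall>a2\<in>{c\<in>E. snd c = x}. a1 = a2"
  proof (intro ballI)
    fix c d assume "c \<in> {c\<in>E. snd c = x}" "d \<in> {c\<in>E. snd c = x}"
    then show "c = d" using inj_onD[OF DR_D(3)[OF assms], of c d] by auto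
  qed
  ultimately show ?thesis using card_le_Suc0_iff_eq[of "{c\<in>E. snd c = x}"] by simp
qed

lemma inQ: "T \<subseteq> Q a \<Longrightarrow> c \<in> T \<Longrightarrow> snd c = a \<and> fst c < 4"
proof -
  assume "T \<subseteq> Q a" "c \<in> T"
  then have "c \<in> Q a" by (rule subsetD)
  then show ?thesis by (simp add: Q_iff)
qed
lemma inDR: "E \<subseteq> {0..<4::nat} \<times> Y \<Longrightarrow> c \<in> E \<Longrightarrow> snd c \<in> Y \<and> fst c < 4" by (cases c) auto

lemma disjQE: "T \<subseteq> Q a \<Longrightarrow> E \<subseteq> {0..<4::nat} \<times> Y \<Longrightarrow> a \<notin> Y \<Longrightarrow> T \<inter> E = {}"
proof -
  assume a: "T \<subseteq> Q a" "E \<subseteq> {0..<4::nat} \<times> Y" "a \<notin> Y"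
  { fix c assume "c \<in> T" "c \<in> E"
    then have False using inQ[OF a(1), of c] inDR[OF a(2), of c] a(3) by auto }
  then show ?thesis by blast
qed

lemma disjQQ: "T \<subseteq> Q a \<Longrightarrow> P \<subseteq> Q b \<Longrightarrow> a \<noteq> b \<Longrightarrow> T \<inter> P = {}"
  by (auto simp: Q_def)

definition rk :: "card set \<Rightarrow> nat \<Rightarrow> card set" where "rk s x = {c\<in>s. snd c = x}"


lemma fh_lower: "r * (r - 1) * (4 * (6 * (((r - 2) choose 2) * 16))) \<le> freq r FH"
proof -
  let ?D = "Sigma {1..r} (\<lambda>a. Sigma ({1..r} - {a}) (\<lambda>b. {T. T \<subseteq> Q a \<and> card T = 3} \<times> {P. P \<subseteq> Q b \<and> card P = 2} \<times> DR ({1..r} - {a,b}) 2))"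
  let ?f = "\<lambda>(a::nat,b::nat,T::card set,P::card set,E::card set). T \<union> P \<union> E"
  have dec: "card (rk (?f x) z) = 3 \<longleftrightarrow> z = fst x"
         "card (rk (?f x) z) = 2 \<longleftrightarrow> z = fst (snd x)"
         "rk (?f x) (fst x) = fst (snd (snd x))"
         "rk (?f x) (fst (snd x)) = fst (snd (snd (snd x)))"
    if x: "x \<in> ?D" for x z
  proof -
    obtain a b T P E where xe: "x = (a,b,T,P,E)" by (cases x) auto
    have a: "a \<in> {1..r}" and b: "b \<in> {1..r}" "b \<noteq> a" and T: "T \<subseteq> Q a" "card T = 3"
      and P: "P \<subseteq> Q b" "card P = 2" and E: "E \<in> DR ({1..r} - {a,b}) 2" using x xe by auto
    note ED = DR_D[OF E]
    have rka: "rk (?f x) a = T" using T P b ED by (auto simp: xe rk_def Q_iff)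
    have rkb: "rk (?f x) b = P" using T P b ED by (auto simp: xe rk_def Q_iff)
    have rko: "card (rk (?f x) z) \<le> 1" if "z \<noteq> a" "z \<noteq> b"
    proof -
      have "rk (?f x) z = {c\<in>E. snd c = z}" using T P that by (auto simp: xe rk_def Q_iff)
      then show ?thesis using DR_le1[OF E] by simp
    qed
    show "card (rk (?f x) z) = 3 \<longleftrightarrow> z = fst x"
      using rka rkb rko T P b by (cases "z = a"; cases "z = b") (auto simp: xe)
    show "card (rk (?f x) z) = 2 \<longleftrightarrow> z = fst (snd x)"
      using rka rkb rko T P b by (cases "z = a"; cases "z = b") (auto simp: xe)
    show "rk (?f x) (fst x) = fst (snd (snd x))" using rka xe by simp
    show "rk (?f x) (fst (snd x)) = fst (snd (snd (snd x)))" using rkb xe by simp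
  qed
  have img: "?f ` ?D \<subseteq> {s \<in> seven_sets r. contains_type r FH s}"
  proof
    fix s assume "s \<in> ?f ` ?D"
    then obtain x where x: "x \<in> ?D" and sx: "s = ?f x" by blast
    obtain a b T P E where xe: "x = (a,b,T,P,E)" by (cases x) auto
    have a: "a \<in> {1..r}" and b: "b \<in> {1..r}" "b \<noteq> a" and T: "T \<subseteq> Q a" "card T = 3"
      and P: "P \<subseteq> Q b" "card P = 2" and E: "E \<in> DR ({1..r} - {a,b}) 2" using x xe by auto
    have s: "s = T \<union> P \<union> E" using sx xe by simp
    note ED = DR_D[OF E]
    have fT: "finite T" "finite P" using T P finite_subset fin_Q by blast+
    have d1: "T \<inter> P = {}" using b(2) subsetD[OF T(1)] subsetD[OF P(1)] by (fastforce simp: Q_iff)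
    have d2: "(T \<union> P) \<inter> E = {}"
    proof -
      { fix c assume "c \<in> E" "c \<in> T \<union> P"
        then have False using inQ[OF T(1), of c] inQ[OF P(1), of c] inDR[OF ED(1), of c] by auto }
      then show ?thesis by blast
    qed
    have cTP: "card (T \<union> P) = 5" using d1 fT T P by (simp add: card_Un_disjoint)
    have cs: "card s = 7" using d2 cTP fT ED by (simp add: s card_Un_disjoint)
    have sd: "s \<subseteq> deck r" using s T P ED Q_sub_deck[OF a] Q_sub_deck[OF b(1)] by (auto simp: deck_def)
    have "T \<subseteq> {c \<in> T \<union> P. rank c = a}" using T by (auto simp: Q_iff rank_def)
    then have h3: "3 \<le> card {c \<in> T \<union> P. rank c = a}" using T fT card_mono[of "{c \<in> T \<union> P. rank c = a}" T] by auto
    have "P \<subseteq> {c \<in> T \<union> P. rank c = b}" using P by (auto simp: Q_iff rank_def)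
    then have h2: "2 \<le> card {c \<in> T \<union> P. rank c = b}" using P fT card_mono[of "{c \<in> T \<union> P. rank c = b}" P] by auto
    have "of_type r FH (T \<union> P)" unfolding of_type.simps has_n_of_rank_def
      apply (rule exI[of _ a], rule exI[of _ b]) using h3 h2 b(2) by simp
    then have "contains_type r FH s" unfolding contains_type_def using cTP s by blast
    then show "s \<in> {s \<in> seven_sets r. contains_type r FH s}" using sd cs by (simp add: seven_sets_def)
  qed
  have inj: "inj_on ?f ?D"
  proof (rule inj_onI)
    fix x y assume x: "x \<in> ?D" and y: "y \<in> ?D" and e: "?f x = ?f y"
    have "fst x = fst y" using dec(1)[OF x, of "fst y"] dec(1)[OF y, of "fst y"] e by simp
    moreover have "fst (snd x) = fst (snd y)" using dec(2)[OF x, of "fst (snd y)"] dec(2)[OF y, of "fst (snd y)"] e by simp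
    moreover have "fst (snd (snd x)) = fst (snd (snd y))" using dec(3)[OF x] dec(3)[OF y] e \<open>fst x = fst y\<close> by simp
    moreover have "fst (snd (snd (snd x))) = fst (snd (snd (snd y)))" using dec(4)[OF x] dec(4)[OF y] e \<open>fst (snd x) = fst (snd y)\<close> by simp
    moreover have "snd (snd (snd (snd x))) = snd (snd (snd (snd y)))"
    proof -
      obtain a b T P E where xe: "x = (a,b,T,P,E)" by (cases x) auto
      obtain a' b' T' P' E' where ye: "y = (a',b',T',P',E')" by (cases y) auto
      have "T \<union> P \<union> E = T' \<union> P' \<union> E'" using e xe ye by simp
      moreover have "(T \<union> P) \<inter> E = {}" "(T' \<union> P') \<inter> E' = {}"
        using x y xe ye disjQE[of T a E "{1..r} - {a,b}"] disjQE[of P b E "{1..r} - {a,b}"]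
           disjQE[of T' a' E' "{1..r} - {a',b'}"] disjQE[of P' b' E' "{1..r} - {a',b'}"] by (auto simp: DR_def)
      moreover have "T = T'" "P = P'" using calculation xe ye \<open>fst (snd (snd x)) = fst (snd (snd y))\<close> \<open>fst (snd (snd (snd x))) = fst (snd (snd (snd y)))\<close> by auto
      ultimately have "E = E'" by blast
      then show ?thesis using xe ye by simp
    qed
    ultimately show "x = y" by (metis prod.collapse)
  qed
  have cD: "r * (r - 1) * (4 * (6 * (((r - 2) choose 2) * 16))) \<le> card ?D"
  proof -
    have "card ?D = (\<Sum>a\<in>{1..r}. card (Sigma ({1..r} - {a}) (\<lambda>b. {T. T \<subseteq> Q a \<and> card T = 3} \<times> {P. P \<subseteq> Q b \<and> card P = 2} \<times> DR ({1..r} - {a,b}) 2)))"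
      by (rule card_SigmaI) (auto simp: DR_def intro!: finite_SigmaI finite_cartesian_product intro: finite_subset)
    also have "\<dots> \<ge> (\<Sum>a\<in>{1..r}. (r - 1) * (4 * (6 * (((r - 2) choose 2) * 16))))"
    proof (rule sum_mono)
      fix a assume a: "a \<in> {1..r}"
      have "card (Sigma ({1..r} - {a}) (\<lambda>b. {T. T \<subseteq> Q a \<and> card T = 3} \<times> {P. P \<subseteq> Q b \<and> card P = 2} \<times> DR ({1..r} - {a,b}) 2))
         = (\<Sum>b\<in>{1..r} - {a}. card ({T. T \<subseteq> Q a \<and> card T = 3} \<times> {P. P \<subseteq> Q b \<and> card P = 2} \<times> DR ({1..r} - {a,b}) 2))"
        by (rule card_SigmaI) (auto simp: DR_def intro!: finite_cartesian_product intro: finite_subset)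
      also have "\<dots> \<ge> (\<Sum>b\<in>{1..r} - {a}. 4 * (6 * (((r - 2) choose 2) * 16)))"
      proof (rule sum_mono)
        fix b assume b: "b \<in> {1..r} - {a}"
        have c2: "card ({1..r} - {a,b}) = r - 2" using a b by (simp add: card_Diff_subset)
        have "((r - 2) choose 2) * 16 \<le> card (DR ({1..r} - {a,b}) 2)" using card_DR[of "{1..r} - {a,b}" 2] c2 by simp
        then show "4 * (6 * (((r - 2) choose 2) * 16)) \<le> card ({T. T \<subseteq> Q a \<and> card T = 3} \<times> {P. P \<subseteq> Q b \<and> card P = 2} \<times> DR ({1..r} - {a,b}) 2)"
          by (simp add: card_cartesian_product card_subsets_eq)
      qed
      finally show "(r - 1) * (4 * (6 * (((r - 2) choose 2) * 16))) \<le> card (Sigma ({1..r} - {a}) (\<lambda>b. {T. T \<subseteq> Q a \<and> card T = 3} \<times> {P. P \<subseteq> Q b \<and> card P = 2} \<times> DR ({1..r} - {a,b}) 2))"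
        using a by simp
    qed
    finally show ?thesis by (simp add: mult.assoc)
  qed
  show ?thesis unfolding freq_def using card_mono[OF _ img] card_image[OF inj] cD by simp
qed

lemma twop_lower: "(r choose 2) * (6 * (6 * (((r - 2) choose 3) * 64))) \<le> freq r TwoP"
proof -
  let ?D = "Sigma {R. R \<subseteq> {1..r} \<and> card R = 2} (\<lambda>R. {P. P \<subseteq> Q (Min R) \<and> card P = 2} \<times> {P. P \<subseteq> Q (Max R) \<and> card P = 2} \<times> DR ({1..r} - R) 3)"
  let ?f = "\<lambda>(R::nat set,P::card set,P2::card set,E::card set). P \<union> P2 \<union> E"
  have unf: "\<exists>a b. a < b \<and> fst x = {a,b} \<and> a \<in> {1..r} \<and> b \<in> {1..r} \<and> fst (snd x) \<subseteq> Q a \<and> card (fst (snd x)) = 2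
     \<and> fst (snd (snd x)) \<subseteq> Q b \<and> card (fst (snd (snd x))) = 2 \<and> snd (snd (snd x)) \<in> DR ({1..r} - {a,b}) 3"
    if x: "x \<in> ?D" for x
  proof -
    obtain R P P2 E where xe: "x = (R,P,P2,E)" by (cases x) auto
    have R: "R \<subseteq> {1..r}" "card R = 2" using x xe by auto
    then obtain a b where ab: "R = {a,b}" "a \<noteq> b" by (meson card_2_iff)
    define a' where "a' = min a b"
    define b' where "b' = max a b"
    have ab': "R = {a',b'}" "a' < b'" using ab by (auto simp: a'_def b'_def)
    have mm: "Min R = a'" "Max R = b'" using ab' by auto
    show ?thesis using x xe ab' mm R by (intro exI[of _ a'] exI[of _ b']) auto
  qed
  have dec: "{z. card (rk (?f x) z) = 2} = fst x"
            "rk (?f x) (Min (fst x)) = fst (snd x)"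
            "rk (?f x) (Max (fst x)) = fst (snd (snd x))"
    if x: "x \<in> ?D" for x
  proof -
    obtain a b where ab: "a < b" "fst x = {a,b}" "a \<in> {1..r}" "b \<in> {1..r}" and P: "fst (snd x) \<subseteq> Q a" "card (fst (snd x)) = 2"
      and P2: "fst (snd (snd x)) \<subseteq> Q b" "card (fst (snd (snd x))) = 2" and E: "snd (snd (snd x)) \<in> DR ({1..r} - {a,b}) 3"
      using unf[OF x] by blast
    obtain R P1 P2' E' where xe: "x = (R,P1,P2',E')" by (cases x) auto
    note ED = DR_D[OF E]
    have rka: "rk (?f x) a = P1" using P P2 ab ED by (auto simp: xe rk_def Q_iff)
    have rkb: "rk (?f x) b = P2'" using P P2 ab ED by (auto simp: xe rk_def Q_iff)
    have rko: "card (rk (?f x) z) \<le> 1" if "z \<noteq> a" "z \<noteq> b" for z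
    proof -
      have "rk (?f x) z = {c\<in>E'. snd c = z}" using P P2 that by (auto simp: xe rk_def Q_iff)
      then show ?thesis using DR_le1[OF E] xe by simp
    qed
    have "card (rk (?f x) z) = 2 \<longleftrightarrow> z \<in> {a,b}" for z
      using rka rkb rko[of z] P P2 xe by (cases "z = a"; cases "z = b") auto
    then show "{z. card (rk (?f x) z) = 2} = fst x" using ab by auto
    have "Min (fst x) = a" "Max (fst x) = b" using ab by auto
    then show "rk (?f x) (Min (fst x)) = fst (snd x)" "rk (?f x) (Max (fst x)) = fst (snd (snd x))"
      using rka rkb xe by auto
  qed
  have img: "?f ` ?D \<subseteq> {s \<in> seven_sets r. contains_type r TwoP s}"
  proof
    fix s assume "s \<in> ?f ` ?D"
    then obtain x where x: "x \<in> ?D" and sx: "s = ?f x" by blast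
    obtain a b where ab: "a < b" "fst x = {a,b}" "a \<in> {1..r}" "b \<in> {1..r}" and P: "fst (snd x) \<subseteq> Q a" "card (fst (snd x)) = 2"
      and P2: "fst (snd (snd x)) \<subseteq> Q b" "card (fst (snd (snd x))) = 2" and E: "snd (snd (snd x)) \<in> DR ({1..r} - {a,b}) 3"
      using unf[OF x] by blast
    obtain R P1 P2' E' where xe: "x = (R,P1,P2',E')" by (cases x) auto
    have fY: "finite ({1..r} - {a,b})" by simp
    note ED = DR_D[OF E fY]
    have s: "s = P1 \<union> P2' \<union> E'" using sx xe by simp
    have fT: "finite P1" "finite P2'" using P(2) P2(2) xe by (metis card.infinite zero_neq_numeral fst_conv snd_conv)+
    have d1: "P1 \<inter> P2' = {}" using disjQQ[of P1 a P2' b] P P2 xe ab by auto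
    have d2: "(P1 \<union> P2') \<inter> E' = {}"
      using disjQE[of P1 a E' "{1..r} - {a,b}"] disjQE[of P2' b E' "{1..r} - {a,b}"] P P2 ED xe by auto
    have cTP: "card (P1 \<union> P2') = 4" using d1 fT P P2 xe by (simp add: card_Un_disjoint)
    have cs: "card s = 7" using d2 cTP fT ED xe by (simp add: s card_Un_disjoint)
    have sd: "s \<subseteq> deck r" using s P P2 ED xe Q_sub_deck[OF ab(3)] Q_sub_deck[OF ab(4)] by (auto simp: deck_def)
    have "card E' = 3" using ED(2) xe by simp
    then have "E' \<noteq> {}" by auto
    then obtain e where e: "e \<in> E'" by blast
    have eP: "e \<notin> P1 \<union> P2'" using d2 e by blast
    let ?h = "insert e (P1 \<union> P2')"
    have ch: "card ?h = 5" using cTP eP fT by simp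
    have hs: "?h \<subseteq> s" using s e by auto
    have "P1 \<subseteq> {c \<in> ?h. rank c = a}" using inQ[of P1 a] P xe by (auto simp: rank_def)
    then have h1: "2 \<le> card {c \<in> ?h. rank c = a}" using P xe fT card_mono[of "{c \<in> ?h. rank c = a}" P1] by auto
    have "P2' \<subseteq> {c \<in> ?h. rank c = b}" using inQ[of P2' b] P2 xe by (auto simp: rank_def)
    then have h2: "2 \<le> card {c \<in> ?h. rank c = b}" using P2 xe fT card_mono[of "{c \<in> ?h. rank c = b}" P2'] by auto
    have "of_type r TwoP ?h" unfolding of_type.simps has_n_of_rank_def
      apply (rule disjI1, rule exI[of _ a], rule exI[of _ b]) using h1 h2 ab(1) by simp
    then have "contains_type r TwoP s" unfolding contains_type_def using ch hs by blast
    then show "s \<in> {s \<in> seven_sets r. contains_type r TwoP s}" using sd cs by (simp add: seven_sets_def)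
  qed
  have inj: "inj_on ?f ?D"
  proof (rule inj_onI)
    fix x y assume x: "x \<in> ?D" and y: "y \<in> ?D" and e: "?f x = ?f y"
    have R: "fst x = fst y" using dec(1)[OF x] dec(1)[OF y] e by simp
    have P: "fst (snd x) = fst (snd y)" using dec(2)[OF x] dec(2)[OF y] e R by simp
    have P2: "fst (snd (snd x)) = fst (snd (snd y))" using dec(3)[OF x] dec(3)[OF y] e R by simp
    obtain a b where ab: "a < b" "fst x = {a,b}" and Pa: "fst (snd x) \<subseteq> Q a" "fst (snd (snd x)) \<subseteq> Q b"
      and E: "snd (snd (snd x)) \<in> DR ({1..r} - {a,b}) 3" using unf[OF x] by blast
    obtain a' b' where ab': "a' < b'" "fst y = {a',b'}" and Pa': "fst (snd y) \<subseteq> Q a'" "fst (snd (snd y)) \<subseteq> Q b'"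
      and E': "snd (snd (snd y)) \<in> DR ({1..r} - {a',b'}) 3" using unf[OF y] by blast
    obtain R1 P1 P21 E1 where xe: "x = (R1,P1,P21,E1)" by (cases x) auto
    obtain R2 P12 P22 E2 where ye: "y = (R2,P12,P22,E2)" by (cases y) auto
    have d: "(P1 \<union> P21) \<inter> E1 = {}" "(P12 \<union> P22) \<inter> E2 = {}"
      using disjQE[of P1 a E1 "{1..r} - {a,b}"] disjQE[of P21 b E1 "{1..r} - {a,b}"]
        disjQE[of P12 a' E2 "{1..r} - {a',b'}"] disjQE[of P22 b' E2 "{1..r} - {a',b'}"]
        Pa Pa' DR_D(1)[OF E] DR_D(1)[OF E'] xe ye by auto
    have "P1 \<union> P21 \<union> E1 = P12 \<union> P22 \<union> E2" using e xe ye by simp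
    then have "E1 = E2" using d P P2 xe ye by auto
    then show "x = y" using R P P2 xe ye by simp
  qed
  have cD: "(r choose 2) * (6 * (6 * (((r - 2) choose 3) * 64))) \<le> card ?D"
  proof -
    have "card ?D = (\<Sum>R\<in>{R. R \<subseteq> {1..r} \<and> card R = 2}. card ({P. P \<subseteq> Q (Min R) \<and> card P = 2} \<times> {P. P \<subseteq> Q (Max R) \<and> card P = 2} \<times> DR ({1..r} - R) 3))"
      by (rule card_SigmaI) (auto simp: DR_def intro!: finite_cartesian_product intro: finite_subset)
    also have "\<dots> \<ge> (\<Sum>R\<in>{R. R \<subseteq> {1..r} \<and> card R = 2}. 6 * (6 * (((r - 2) choose 3) * 64)))"
    proof (rule sum_mono)
      fix R assume R: "R \<in> {R. R \<subseteq> {1..r} \<and> card R = 2}"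
      have c2: "card ({1..r} - R) = r - 2" using R card_Diff_subset[of R "{1..r}"] by (auto intro: finite_subset)
      have "((r - 2) choose 3) * 64 \<le> card (DR ({1..r} - R) 3)" using card_DR[of "{1..r} - R" 3] c2 by simp
      then show "6 * (6 * (((r - 2) choose 3) * 64)) \<le> card ({P. P \<subseteq> Q (Min R) \<and> card P = 2} \<times> {P. P \<subseteq> Q (Max R) \<and> card P = 2} \<times> DR ({1..r} - R) 3)"
        by (simp add: card_cartesian_product card_subsets_eq)
    qed
    finally show ?thesis using n_subsets[of "{1..r}" 2] by simp
  qed
  show ?thesis unfolding freq_def using card_mono[OF _ img] card_image[OF inj] cD by simp
qed

definition sk :: "card set \<Rightarrow> nat \<Rightarrow> card set" where "sk s j = {c\<in>s. fst c = j}"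

lemma fl_lower: "4 * ((r choose 5) * ((3*r) choose 2)) \<le> freq r FL"
proof -
  let ?D = "Sigma {0..<4::nat} (\<lambda>j. {F. F \<subseteq> {j}\<times>{1..r} \<and> card F = 5} \<times> {E. E \<subseteq> ({0..<4::nat}-{j})\<times>{1..r} \<and> card E = 2})"
  let ?f = "\<lambda>(j::nat,F::card set,E::card set). F \<union> E"
  have dec: "card (sk (?f x) z) = 5 \<longleftrightarrow> z = fst x" "sk (?f x) (fst x) = fst (snd x)"
    if x: "x \<in> ?D" for x z
  proof -
    obtain j F E where xe: "x = (j,F,E)" by (cases x) auto
    have F: "F \<subseteq> {j}\<times>{1..r}" "card F = 5" and E: "E \<subseteq> ({0..<4::nat}-{j})\<times>{1..r}" "card E = 2" using x xe by auto
    have skj: "sk (?f x) j = F" using F E xe by (auto simp: sk_def)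
    have sko: "card (sk (?f x) z) \<le> 2" if "z \<noteq> j"
    proof -
      have "sk (?f x) z \<subseteq> E" using F that xe by (auto simp: sk_def)
      moreover have "finite E" using E(2) by (metis card.infinite zero_neq_numeral)
      ultimately show ?thesis using E(2) card_mono by fastforce
    qed
    show "card (sk (?f x) z) = 5 \<longleftrightarrow> z = fst x" using skj sko F xe by (cases "z = j") auto
    show "sk (?f x) (fst x) = fst (snd x)" using skj xe by simp
  qed
  have img: "?f ` ?D \<subseteq> {s \<in> seven_sets r. contains_type r FL s}"
  proof
    fix s assume "s \<in> ?f ` ?D"
    then obtain x where x: "x \<in> ?D" and sx: "s = ?f x" by blast
    obtain j F E where xe: "x = (j,F,E)" by (cases x) auto
    have j: "j < 4" and F: "F \<subseteq> {j}\<times>{1..r}" "card F = 5" and E: "E \<subseteq> ({0..<4::nat}-{j})\<times>{1..r}" "card E = 2" using x xe by auto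
    have s: "s = F \<union> E" using sx xe by simp
    have fin: "finite F" "finite E" using F(2) E(2) by (metis card.infinite zero_neq_numeral)+
    have d: "F \<inter> E = {}" using F(1) E(1) by auto
    have cs: "card s = 7" using d fin F E by (simp add: s card_Un_disjoint)
    have sd: "s \<subseteq> deck r" using s F E j by (auto simp: deck_def)
    have "\<forall>c\<in>F. fst c = j" using F(1) by (auto simp: subset_iff mem_Times_iff)
    then have "is_flush F" by (auto simp: is_flush_def suit_def)
    then have "contains_type r FL s" unfolding contains_type_def using F s by (intro exI[of _ F]) auto
    then show "s \<in> {s \<in> seven_sets r. contains_type r FL s}" using sd cs by (simp add: seven_sets_def)
  qed
  have inj: "inj_on ?f ?D"
  proof (rule inj_onI)
    fix x y assume x: "x \<in> ?D" and y: "y \<in> ?D" and e: "?f x = ?f y"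
    have J: "fst x = fst y" using dec(1)[OF x, of "fst y"] dec(1)[OF y, of "fst y"] e by simp
    have F: "fst (snd x) = fst (snd y)" using dec(2)[OF x] dec(2)[OF y] e J by simp
    obtain j F E where xe: "x = (j,F,E)" by (cases x) auto
    obtain j' F' E' where ye: "y = (j',F',E')" by (cases y) auto
    have "F \<inter> E = {}" "F' \<inter> E' = {}" using x y xe ye by auto
    moreover have "F \<union> E = F' \<union> E'" using e xe ye by simp
    ultimately have "E = E'" using F xe ye by auto
    then show "x = y" using J F xe ye by simp
  qed
  have cD: "card ?D = 4 * ((r choose 5) * ((3*r) choose 2))"
  proof -
    have "card ?D = (\<Sum>j\<in>{0..<4::nat}. card ({F. F \<subseteq> {j}\<times>{1..r} \<and> card F = 5} \<times> {E. E \<subseteq> ({0..<4::nat}-{j})\<times>{1..r} \<and> card E = 2}))"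
      by (rule card_SigmaI) auto
    also have "\<dots> = (\<Sum>j\<in>{0..<4::nat}. (r choose 5) * ((3*r) choose 2))"
    proof (intro sum.cong refl)
      fix j assume j: "j \<in> {0..<4::nat}"
      have c3: "card ({0..<4::nat}-{j}) = 3" using j by simp
      have A: "card {F. F \<subseteq> {j}\<times>{1..r} \<and> card F = 5} = r choose 5"
        by (rule card_subsets_eq) (auto simp: card_cartesian_product)
      have B: "card {E. E \<subseteq> ({0..<4::nat}-{j})\<times>{1..r} \<and> card E = 2} = (3*r) choose 2"
        by (rule card_subsets_eq) (use c3 in \<open>auto simp: card_cartesian_product\<close>)
      show "card ({F. F \<subseteq> {j}\<times>{1..r} \<and> card F = 5} \<times> {E. E \<subseteq> ({0..<4::nat}-{j})\<times>{1..r} \<and> card E = 2}) = (r choose 5) * ((3*r) choose 2)"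
        by (simp only: card_cartesian_product A B)
    qed
    finally show ?thesis by simp
  qed
  show ?thesis unfolding freq_def using card_mono[OF _ img] card_image[OF inj] cD by simp
qed

fun covc :: "nat \<Rightarrow> nat \<Rightarrow> nat \<Rightarrow> int" where
  "covc n 0 m = int (4*m choose n)"
| "covc n (Suc k) m = covc n k m - covc n k (m - 1)"

definition covers :: "card set \<Rightarrow> nat set \<Rightarrow> bool" where
  "covers s W = (\<forall>a\<in>W. \<exists>c\<in>s. snd c = a)"

definition CS :: "nat \<Rightarrow> nat set \<Rightarrow> nat set \<Rightarrow> card set set" where
  "CS n W Y = {s. s \<subseteq> {0..<4::nat} \<times> Y \<and> card s = n \<and> covers s W}"

lemma fin_CS: "finite Y \<Longrightarrow> finite (CS n W Y)"
  by (rule finite_subset[of _ "Pow ({0..<4::nat} \<times> Y)"]) (auto simp: CS_def)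

lemma covc_card_aux: "\<forall>W Y. finite Y \<longrightarrow> W \<subseteq> Y \<longrightarrow> card W = k \<longrightarrow> int (card (CS n W Y)) = covc n k (card Y)"
proof (induction k)
  case 0
  show ?case
  proof (intro allI impI)
    fix W Y :: "nat set" assume Y: "finite Y" and WY: "W \<subseteq> Y" and cW: "card W = 0"
    have "W = {}" using cW WY Y finite_subset by fastforce
    then have "CS n W Y = {s. s \<subseteq> {0..<4::nat} \<times> Y \<and> card s = n}" by (auto simp: CS_def covers_def)
    also have "card \<dots> = (4 * card Y) choose n" using Y by (intro card_subsets_eq) (auto simp: card_cartesian_product)
    finally show "int (card (CS n W Y)) = covc n 0 (card Y)" by simp
  qed
next
  case (Suc k)
  show ?case
  proof (intro allI impI)
    fix W Y :: "nat set" assume Y: "finite Y" and WY: "W \<subseteq> Y" and cW: "card W = Suc k"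
    then have "W \<noteq> {}" by auto
    then obtain w where w: "w \<in> W" by blast
    let ?W' = "W - {w}"
    have cW': "card ?W' = k" using cW w by (simp add: card_Diff_singleton_if)
    have W'Y: "?W' \<subseteq> Y" "?W' \<subseteq> Y - {w}" using WY by auto
    have fY': "finite (Y - {w})" using Y by simp
    have cY': "card (Y - {w}) = card Y - 1" using w WY by (auto simp: card_Diff_singleton_if)
    have split: "CS n ?W' Y = CS n W Y \<union> CS n ?W' (Y - {w})"
    proof
      show "CS n ?W' Y \<subseteq> CS n W Y \<union> CS n ?W' (Y - {w})"
      proof
        fix s assume s: "s \<in> CS n ?W' Y"
        show "s \<in> CS n W Y \<union> CS n ?W' (Y - {w})"
        proof (cases "\<exists>c\<in>s. snd c = w")
          case True
          then have "covers s W" using s by (auto simp: CS_def covers_def)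
          then show ?thesis using s by (auto simp: CS_def)
        next
          case False
          then have "s \<subseteq> {0..<4::nat} \<times> (Y - {w})" using s by (auto simp: CS_def)
          then show ?thesis using s by (auto simp: CS_def)
        qed
      qed
      show "CS n W Y \<union> CS n ?W' (Y - {w}) \<subseteq> CS n ?W' Y" by (auto simp: CS_def covers_def)
    qed
    have disj: "CS n W Y \<inter> CS n ?W' (Y - {w}) = {}"
    proof -
      { fix s assume s1: "s \<in> CS n W Y" and s2: "s \<in> CS n ?W' (Y - {w})"
        from s1 w obtain c where c: "c \<in> s" "snd c = w" by (auto simp: CS_def covers_def)
        from s2 c have "c \<in> {0..<4::nat} \<times> (Y - {w})" by (auto simp: CS_def)
        then have False using c by auto }
      then show ?thesis by blast
    qed
    have "card (CS n ?W' Y) = card (CS n W Y) + card (CS n ?W' (Y - {w}))"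
      unfolding split using disj fin_CS[OF Y] fin_CS[OF fY'] by (simp add: card_Un_disjoint)
    moreover have "int (card (CS n ?W' Y)) = covc n k (card Y)" using Suc.IH Y W'Y cW' by blast
    moreover have "int (card (CS n ?W' (Y - {w}))) = covc n k (card Y - 1)" using Suc.IH fY' W'Y cW' cY' by metis
    ultimately show "int (card (CS n W Y)) = covc n (Suc k) (card Y)" by simp
  qed
qed

lemma covc_card: "finite Y \<Longrightarrow> W \<subseteq> Y \<Longrightarrow> int (card (CS n W Y)) = covc n (card W) (card Y)"
  using covc_card_aux by blast

lemma covc_pos: "0 < k \<Longrightarrow> covc n k m = covc n (k-1) m - covc n (k-1) (m-1)"
  by (cases k) auto

definition P7 :: "real \<Rightarrow> real" where "P7 x = x*(x-1)*(x-2)*(x-3)*(x-4)*(x-5)*(x-6)"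

lemma aux_prod: "(\<Prod>i = Suc 0..k. (x::real) + (1 - real i)) = (\<Prod>i<k. x - real i)"
  by (induction k) (auto simp: prod.cl_ivl_Suc algebra_simps)

lemma choose_real: "real (n choose k) = (\<Prod>i<k. (real n - real i)) / fact k"
proof -
  have "real (n choose k) = (real n gchoose k)" by (simp add: binomial_gbinomial)
  also have "\<dots> = pochhammer (real n - real k + 1) k / fact k" by (simp add: gbinomial_pochhammer')
  also have "pochhammer (real n - real k + 1) k = (\<Prod>i<k. (real n - real i))"
    by (simp add: pochhammer_prod_rev aux_prod)
  finally show ?thesis .
qed

lemma ch7: "real (n choose 7) = P7 (real n) / 5040"
  by (simp add: choose_real numeral_eq_Suc lessThan_Suc fact_numeral mult_ac P7_def)
lemma ch5: "real (n choose 5) = real n*(real n-1)*(real n-2)*(real n-3)*(real n-4) / 120"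
  by (simp add: choose_real numeral_eq_Suc lessThan_Suc fact_numeral mult_ac)
lemma ch4: "real (n choose 4) = real n*(real n-1)*(real n-2)*(real n-3) / 24"
  by (simp add: choose_real numeral_eq_Suc lessThan_Suc fact_numeral mult_ac)
lemma ch3: "real (n choose 3) = real n*(real n-1)*(real n-2) / 6"
  by (simp add: choose_real numeral_eq_Suc lessThan_Suc fact_numeral mult_ac)
lemma ch2: "real (n choose 2) = real n*(real n-1) / 2"
  by (simp add: choose_real numeral_eq_Suc lessThan_Suc fact_numeral mult_ac)

definition covp :: "real \<Rightarrow> real" where "covp m = 512*(4*m-20)*(4*m-21)+7680*(4*m-20)+28160"

lemma covc75: assumes "m \<ge> 5" shows "real_of_int (covc 7 5 m) = covp (real m)"
proof -
  obtain u where m: "m = u + 5" using assms by (metis add.commute le_Suc_ex)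
  have l5: "covc 7 5 m' = covc 7 4 m' - covc 7 4 (m' - 1)" for m' using covc_pos[of 5 7 m'] by (simp del: covc.simps)
  have l4: "covc 7 4 m' = covc 7 3 m' - covc 7 3 (m' - 1)" for m' using covc_pos[of 4 7 m'] by (simp del: covc.simps)
  have l3: "covc 7 3 m' = covc 7 2 m' - covc 7 2 (m' - 1)" for m' using covc_pos[of 3 7 m'] by (simp del: covc.simps)
  have l2: "covc 7 2 m' = covc 7 1 m' - covc 7 1 (m' - 1)" for m' using covc_pos[of 2 7 m'] by (simp del: covc.simps)
  have l1: "covc 7 1 m' = covc 7 0 m' - covc 7 0 (m' - 1)" for m' using covc_pos[of 1 7 m'] by (simp del: covc.simps)
  have l0: "real_of_int (covc 7 0 m') = P7 (4 * real m') / 5040" for m' by (simp add: ch7)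
  have e: "covc 7 5 m = covc 7 0 (u+5) - 5*covc 7 0 (u+4) + 10*covc 7 0 (u+3) - 10*covc 7 0 (u+2) + 5*covc 7 0 (u+1) - covc 7 0 u"
    unfolding l5 l4 l3 l2 l1 m by (simp add: add.commute)
  have "real_of_int (covc 7 5 m) = (P7 (4*real u+20) - 5*P7 (4*real u+16) + 10*P7(4*real u+12) - 10*P7(4*real u+8) + 5*P7(4*real u+4) - P7 (4*real u)) / 5040"
    unfolding e by (simp add: ch7 algebra_simps add_divide_distrib diff_divide_distrib)
  also have "\<dots> = covp (real m)" unfolding m covp_def P7_def by simp algebra
  finally show ?thesis .
qed

definition win :: "nat \<Rightarrow> nat \<Rightarrow> nat set" where "win r k = (if k = 0 then {r,1,2,3,4} else {k..k+4})"
definition prr :: "nat \<Rightarrow> nat \<Rightarrow> nat" where "prr r k = (if k = 1 then r else k - 1)"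

lemma covers_img: "h \<subseteq> s \<Longrightarrow> W \<subseteq> rank ` h \<Longrightarrow> covers s W"
  unfolding covers_def rank_def by blast

lemma st_cover: assumes "contains_type r ST s"
  shows "covers s (win r 0) \<or> (\<exists>k. 1 \<le> k \<and> k + 4 \<le> r \<and> covers s (win r k))"
proof -
  obtain h where h: "h \<subseteq> s" "is_straight r h" using assms by (auto simp: contains_type_def)
  show ?thesis
  proof (cases "rank ` h = {r,1,2,3,4}")
    case True
    then show ?thesis using covers_img[OF h(1), of "win r 0"] by (simp add: win_def)
  next
    case False
    then obtain k where k: "1 \<le> k" "k + 4 \<le> r" "rank ` h = {k..k+4}" using h(2) by (auto simp: is_straight_def)
    then have "covers s (win r k)" using covers_img[OF h(1), of "win r k"] by (simp add: win_def)
    then show ?thesis using k by blast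
  qed
qed

lemma chain: "1 \<le> k \<Longrightarrow> k + 4 \<le> r \<Longrightarrow> covers s (win r k) \<Longrightarrow>
   covers s (win r 0) \<or> (\<exists>j. 1 \<le> j \<and> j \<le> k \<and> covers s (win r j) \<and> \<not>(\<exists>c\<in>s. snd c = prr r j))"
proof (induction k)
  case 0
  then show ?case by simp
next
  case (Suc k)
  show ?case
  proof (cases "\<exists>c\<in>s. snd c = prr r (Suc k)")
    case False
    then show ?thesis using Suc.prems by (intro disjI2 exI[of _ "Suc k"]) auto
  next
    case hasr: True
    show ?thesis
    proof (cases "k = 0")
      case k0: True
      then have "prr r (Suc k) = r" by (simp add: prr_def)
      then have "covers s (win r 0)" using hasr Suc.prems(3) k0 by (auto simp: covers_def win_def)
      then show ?thesis by blast
    next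
      case False
      then have pk: "prr r (Suc k) = k" by (simp add: prr_def)
      have cov: "\<forall>a\<in>{Suc k..Suc k+4}. \<exists>c\<in>s. snd c = a" using Suc.prems(3) by (simp add: covers_def win_def)
      have "\<forall>a\<in>{k..k+4}. \<exists>c\<in>s. snd c = a"
      proof
        fix a assume a: "a \<in> {k..k+4}"
        show "\<exists>c\<in>s. snd c = a"
        proof (cases "a = k")
          case True then show ?thesis using hasr pk by simp
        next
          case False then have "a \<in> {Suc k..Suc k+4}" using a by auto
          then show ?thesis using cov by blast
        qed
      qed
      then have "covers s (win r k)" using False by (simp add: covers_def win_def)
      then have "covers s (win r 0) \<or> (\<exists>j. 1 \<le> j \<and> j \<le> k \<and> covers s (win r j) \<and> \<not>(\<exists>c\<in>s. snd c = prr r j))"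
        using Suc.IH Suc.prems False by simp
      then show ?thesis using le_SucI by blast
    qed
  qed
qed

lemma st_upper: assumes r6: "r \<ge> 6"
  shows "int (freq r ST) \<le> covc 7 5 r + int (r - 4) * covc 7 5 (r - 1)"
proof -
  let ?A = "CS 7 (win r 0) {1..r}"
  let ?B = "\<lambda>j. CS 7 (win r j) ({1..r} - {prr r j})"
  have sub: "{s \<in> seven_sets r. contains_type r ST s} \<subseteq> ?A \<union> (\<Union>j\<in>{1..r-4}. ?B j)"
  proof
    fix s assume s: "s \<in> {s \<in> seven_sets r. contains_type r ST s}"
    then have s7: "s \<subseteq> {0..<4::nat} \<times> {1..r}" "card s = 7" using seven_setsD[of s r] by (auto simp: deck_def)
    have ct: "contains_type r ST s" using s by simp
    show "s \<in> ?A \<union> (\<Union>j\<in>{1..r-4}. ?B j)"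
    proof (cases "covers s (win r 0)")
      case True
      then show ?thesis using s7 by (auto simp: CS_def)
    next
      case False
      then obtain k where k: "1 \<le> k" "k + 4 \<le> r" "covers s (win r k)" using st_cover[OF ct] by blast
      then obtain j where j: "1 \<le> j" "j \<le> k" "covers s (win r j)" "\<not>(\<exists>c\<in>s. snd c = prr r j)"
        using chain[OF k] False by blast
      have "s \<subseteq> {0..<4::nat} \<times> ({1..r} - {prr r j})"
      proof
        fix c assume "c \<in> s"
        then show "c \<in> {0..<4::nat} \<times> ({1..r} - {prr r j})" using s7(1) j(4) by (cases c) auto
      qed
      then have "s \<in> ?B j" using s7 j by (auto simp: CS_def)
      moreover have "j \<in> {1..r-4}" using j k by auto
      ultimately show ?thesis by blast
    qed
  qed
  have cA: "int (card ?A) = covc 7 5 r"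
  proof -
    have "card (win r 0) = 5" using r6 by (simp add: win_def)
    moreover have "win r 0 \<subseteq> {1..r}" using r6 by (auto simp: win_def)
    ultimately show ?thesis using covc_card[of "{1..r}" "win r 0" 7] by simp
  qed
  have cB: "int (card (?B j)) = covc 7 5 (r - 1)" if j: "j \<in> {1..r-4}" for j
  proof -
    have "card (win r j) = 5" using j by (simp add: win_def)
    moreover have "win r j \<subseteq> {1..r} - {prr r j}" using j r6 by (auto simp: win_def prr_def)
    moreover have "prr r j \<in> {1..r}" using j r6 by (auto simp: prr_def)
    then have "card ({1..r} - {prr r j}) = r - 1" by simp
    ultimately show ?thesis using covc_card[of "{1..r} - {prr r j}" "win r j" 7] by simp
  qed
  have fin: "finite ?A" "\<And>j. finite (?B j)" by (auto intro: fin_CS)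
  have "card {s \<in> seven_sets r. contains_type r ST s} \<le> card (?A \<union> (\<Union>j\<in>{1..r-4}. ?B j))"
    using sub fin by (intro card_mono) auto
  also have "\<dots> \<le> card ?A + card (\<Union>j\<in>{1..r-4}. ?B j)" by (rule card_Un_le)
  finally have c1: "card {s \<in> seven_sets r. contains_type r ST s} \<le> card ?A + card (\<Union>j\<in>{1..r-4}. ?B j)" .
  have c2: "card (\<Union>j\<in>{1..r-4}. ?B j) \<le> (\<Sum>j\<in>{1..r-4}. card (?B j))" by (rule card_UN_le) simp
  have "freq r ST \<le> card ?A + (\<Sum>j\<in>{1..r-4}. card (?B j))" using c1 c2 unfolding freq_def by linarith
  then have "int (freq r ST) \<le> int (card ?A + (\<Sum>j\<in>{1..r-4}. card (?B j)))" by (simp only: of_nat_le_iff)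
  also have "\<dots> = int (card ?A) + (\<Sum>j\<in>{1..r-4}. int (card (?B j)))" by simp
  also have "(\<Sum>j\<in>{1..r-4}. int (card (?B j))) = (\<Sum>j\<in>{1..r-4}. covc 7 5 (r - 1))"
    using cB by (intro sum.cong) auto
  finally show ?thesis using cA by simp
qed

lemma arA: fixes x::real assumes "x \<ge> 761"
  shows "6*(covp x + (x-4)*covp (x-1)) < x*(4*x-4)*(4*x-5)*(4*x-6)"
proof -
  define t where "t = x - 761"
  have t0: "t \<ge> 0" using assms t_def by simp
  have x: "x = 761 + t" using t_def by simp
  have e: "x*(4*x-4)*(4*x-5)*(4*x-6) - 6*(covp x + (x-4)*covp (x-1)) = 22593902016 + t*(27868703368 + t*(110186072 + t*(145424 + t*(64))))"
    unfolding x covp_def by algebra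
  have "0 < 22593902016 + t*(27868703368 + t*(110186072 + t*(145424 + t*(64::real))))"
    using t0 by (intro add_pos_nonneg mult_nonneg_nonneg add_nonneg_nonneg) auto
  then show ?thesis using e by linarith
qed
lemma arD: fixes x::real assumes "x \<ge> 761"
  shows "12*(x*(4*x)*(4*x-1)*(4*x-2)*(4*x-3)*(4*x-4)) < 4*(x*(x-1)*(x-2)*(x-3)*(x-4)*((3*x)*(3*x-1)))"
proof -
  define t where "t = x - 761"
  have t0: "t \<ge> 0" using assms t_def by simp
  have x: "x = 761 + t" using t_def by simp
  have e: "4*(x*(x-1)*(x-2)*(x-3)*(x-4)*((3*x)*(3*x-1))) - 12*(x*(4*x)*(4*x-1)*(4*x-2)*(4*x-3)*(4*x-4)) = 2870301091047455859840 + t*(29611899949371278064 + t*(129402621785695728 + t*(311177990690124 + t*(445442995560 + t*(380042016 + t*(179112 + t*(36)))))))"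
    unfolding x by algebra
  have "0 < 2870301091047455859840 + t*(29611899949371278064 + t*(129402621785695728 + t*(311177990690124 + t*(445442995560 + t*(380042016 + t*(179112 + t*(36::real)))))))"
    using t0 by (intro add_pos_nonneg mult_nonneg_nonneg add_nonneg_nonneg) auto
  then show ?thesis using e by linarith
qed
lemma arB: fixes x::real assumes "x \<ge> 761"
  shows "x*(4*x)*(4*x-1)*(4*x-2) < 1152*(x*(x-1)*((x-2)*(x-3)))"
proof -
  define t where "t = x - 761"
  have t0: "t \<ge> 0" using assms t_def by simp
  have x: "x = 761 + t" using t_def by simp
  have e: "1152*(x*(x-1)*((x-2)*(x-3))) - x*(4*x)*(4*x-1)*(4*x-2) = 361876960181736 + t*(1906068632576 + t*(3764844040 + t*(3305008 + t*(1088))))"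
    unfolding x by algebra
  have "0 < 361876960181736 + t*(1906068632576 + t*(3764844040 + t*(3305008 + t*(1088::real))))"
    using t0 by (intro add_pos_nonneg mult_nonneg_nonneg add_nonneg_nonneg) auto
  then show ?thesis using e by linarith
qed
lemma arC: fixes x::real assumes "x \<ge> 761"
  shows "4*(x*(4*x)*(4*x-1)*(4*x-2)*(4*x-3)) < 4608*(x*(x-1)*((x-2)*(x-3)*(x-4)))"
proof -
  define t where "t = x - 761"
  have t0: "t \<ge> 0" using assms t_def by simp
  have x: "x = 761 + t" using t_def by simp
  have e: "4608*(x*(x-1)*((x-2)*(x-3)*(x-4))) - 4*(x*(4*x)*(4*x-1)*(4*x-2)*(4*x-3)) = 899857967472706464 + t*(5931784387747456 + t*(15640673312800 + t*(20620265280 + t*(13592576 + t*(3584)))))"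
    unfolding x by algebra
  have "0 < 899857967472706464 + t*(5931784387747456 + t*(15640673312800 + t*(20620265280 + t*(13592576 + t*(3584::real)))))"
    using t0 by (intro add_pos_nonneg mult_nonneg_nonneg add_nonneg_nonneg) auto
  then show ?thesis using e by linarith
qed


lemma strict_of:
  assumes "\<And>s. s \<in> seven_sets r \<Longrightarrow> contains_type r t1 s \<Longrightarrow> contains_type r t2 s"
    and "w \<in> seven_sets r" "contains_type r t2 w" "\<not> contains_type r t1 w"
  shows "freq r t1 < freq r t2"
proof -
  have "{s \<in> seven_sets r. contains_type r t1 s} \<subset> {s \<in> seven_sets r. contains_type r t2 s}"
    using assms by blast
  then show ?thesis unfolding freq_def by (intro psubset_card_mono) simp_all
qed

definition w1 :: "card set" where "w1 = {(0,1),(1,2),(0,3),(0,4),(0,5),(1,6),(1,7)}"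
definition w2 :: "card set" where "w2 = {(0,1),(1,1),(2,1),(0,2),(0,3),(0,4),(0,6)}"
definition w3 :: "card set" where "w3 = {(0,1),(1,1),(0,2),(0,3),(0,4),(0,6),(0,7)}"

lemma w_seven: assumes "r \<ge> 7" shows "w1 \<in> seven_sets r" "w2 \<in> seven_sets r" "w3 \<in> seven_sets r"
  using assms by (auto simp: seven_sets_def deck_def w1_def w2_def w3_def)

lemma rank_bound: "h \<subseteq> w \<Longrightarrow> finite w \<Longrightarrow> card {c\<in>h. rank c = b} \<le> card {c\<in>w. snd c = b}"
  by (rule card_mono) (auto simp: rank_def)

lemma w1_noFL: "\<not> contains_type r FL w1"
proof
  assume "contains_type r FL w1"
  then obtain h where h: "h \<subseteq> w1" "card h = 5" "is_flush h" by (auto simp: contains_type_def)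
  then have "h \<noteq> {}" by auto
  then obtain c where c: "c \<in> h" by blast
  have hs: "h \<subseteq> {d\<in>w1. fst d = fst c}" using h(1) h(3) c unfolding is_flush_def suit_def by blast
  have fw: "finite w1" by (simp add: w1_def)
  have c4: "card {d\<in>w1. fst d = j} \<le> 4" for j
  proof (cases "j = 0")
    case True
    then have "{d\<in>w1. fst d = j} \<subseteq> {(0,1),(0,3),(0,4),(0,5)}" unfolding w1_def by auto
    then have "card {d\<in>w1. fst d = j} \<le> card {(0::nat,1::nat),(0,3),(0,4),(0,5)}" by (intro card_mono) auto
    then show ?thesis by simp
  next
    case False
    then have "{d\<in>w1. fst d = j} \<subseteq> {(1,2),(1,6),(1,7)}" unfolding w1_def by auto
    then have "card {d\<in>w1. fst d = j} \<le> card {(1::nat,2::nat),(1,6),(1,7)}" by (intro card_mono) auto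
    then show ?thesis by simp
  qed
  have "card h \<le> card {d\<in>w1. fst d = fst c}" using hs fw by (intro card_mono) auto
  then show False using h(2) c4[of "fst c"] by linarith
qed

lemma w1_ST: "r \<ge> 7 \<Longrightarrow> contains_type r ST w1"
  unfolding contains_type_def
  apply (rule exI[of _ "{(0,1),(1,2),(0,3),(0,4),(0,5)}"])
  apply (auto simp: w1_def is_straight_def rank_def)
  done

lemma w1_HC: "r \<ge> 7 \<Longrightarrow> contains_type r HC w1"
  unfolding contains_type_def
  by (rule exI[of _ "{(0,1),(1,2),(0,3),(0,4),(0,5)}"]) (auto simp: w1_def)

lemma w2_le1: "b \<noteq> 1 \<Longrightarrow> card {c\<in>w2. snd c = b} \<le> 1"
proof -
  assume b: "b \<noteq> 1"
  have "{c\<in>w2. snd c = b} \<subseteq> {(0,b)}" using b by (auto simp: w2_def)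
  then show ?thesis by (metis card.empty card.insert card_mono empty_iff finite.intros(1) finite_insert One_nat_def)
qed

lemma w3_le1: "b \<noteq> 1 \<Longrightarrow> card {c\<in>w3. snd c = b} \<le> 1"
proof -
  assume b: "b \<noteq> 1"
  have "{c\<in>w3. snd c = b} \<subseteq> {(0,b)}" using b by (auto simp: w3_def)
  then show ?thesis by (metis card.empty card.insert card_mono empty_iff finite.intros(1) finite_insert One_nat_def)
qed

lemma w3_1: "card {c\<in>w3. snd c = 1} \<le> 2"
proof -
  have "{c\<in>w3. snd c = 1} = {(0,1),(1,1)}" by (auto simp: w3_def)
  then show ?thesis by simp
qed

lemma w2_3X: "contains_type r ThreeX w2"
proof -
  let ?h = "{(0,1),(1,1),(2,1),(0,2),(0,3)} :: card set"
  have "{c\<in>?h. rank c = 1} = {(0,1),(1,1),(2,1)}" by (auto simp: rank_def)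
  then have "has_n_of_rank 3 1 ?h" by (simp add: has_n_of_rank_def)
  then show ?thesis unfolding contains_type_def by (intro exI[of _ ?h]) (auto simp: w2_def)
qed

lemma w2_noFH: "\<not> contains_type r FH w2"
proof
  assume "contains_type r FH w2"
  then obtain h a b where h: "h \<subseteq> w2" and ab: "a \<noteq> b" "has_n_of_rank 3 a h" "has_n_of_rank 2 b h"
    by (auto simp: contains_type_def)
  have fw: "finite w2" by (simp add: w2_def)
  have "a = 1"
  proof (rule ccontr)
    assume "a \<noteq> 1"
    then show False using ab(2) rank_bound[OF h fw, of a] w2_le1[of a] by (simp add: has_n_of_rank_def)
  qed
  moreover have "b = 1"
  proof (rule ccontr)
    assume "b \<noteq> 1"
    then show False using ab(3) rank_bound[OF h fw, of b] w2_le1[of b] by (simp add: has_n_of_rank_def)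
  qed
  ultimately show False using ab(1) by simp
qed

lemma w3_1P: "contains_type r OneP w3"
proof -
  let ?h = "{(0,1),(1,1),(0,2),(0,3),(0,4)} :: card set"
  have "{c\<in>?h. rank c = 1} = {(0,1),(1,1)}" by (auto simp: rank_def)
  then have "has_n_of_rank 2 1 ?h" by (simp add: has_n_of_rank_def)
  then show ?thesis unfolding contains_type_def by (intro exI[of _ ?h]) (auto simp: w3_def)
qed

lemma w3_no2P: "\<not> contains_type r TwoP w3"
proof
  assume "contains_type r TwoP w3"
  then obtain h where h: "h \<subseteq> w3" and t: "of_type r TwoP h" by (auto simp: contains_type_def)
  have fw: "finite w3" by (simp add: w3_def)
  have two: "b = 1" if "has_n_of_rank 2 b h" for b
  proof (rule ccontr)
    assume "b \<noteq> 1"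
    then show False using that rank_bound[OF h fw, of b] w3_le1[of b] by (simp add: has_n_of_rank_def)
  qed
  have four: False if "has_n_of_rank 4 a h" for a
  proof (cases "a = 1")
    case True
    then show False using that rank_bound[OF h fw, of a] w3_1 by (simp add: has_n_of_rank_def)
  next
    case False
    then show False using that rank_bound[OF h fw, of a] w3_le1[of a] by (simp add: has_n_of_rank_def)
  qed
  from t show False using two four by auto
qed

lemma mono_SF_ST: "contains_type r SF s \<Longrightarrow> contains_type r ST s"
  by (auto simp: contains_type_def)
lemma mono_SF_FL: "contains_type r SF s \<Longrightarrow> contains_type r FL s"
  by (auto simp: contains_type_def)
lemma mono_FH_3X: "contains_type r FH s \<Longrightarrow> contains_type r ThreeX s"
  by (auto simp: contains_type_def)
lemma mono_2P_1P: "contains_type r TwoP s \<Longrightarrow> contains_type r OneP s"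
proof -
  assume "contains_type r TwoP s"
  then obtain h where h: "h \<subseteq> s" "card h = 5" "of_type r TwoP h" by (auto simp: contains_type_def)
  have "has_n_of_rank 4 a h \<Longrightarrow> has_n_of_rank 2 a h" for a by (simp add: has_n_of_rank_def)
  then have "\<exists>a. has_n_of_rank 2 a h" using h(3) by auto
  then show ?thesis using h by (auto simp: contains_type_def)
qed
lemma mono_HC: "s \<in> seven_sets r \<Longrightarrow> contains_type r HC s"
proof -
  assume "s \<in> seven_sets r"
  then have "5 \<le> card s" using seven_setsD by simp
  then obtain h where "h \<subseteq> s" "card h = 5" by (meson obtain_subset_with_card_n)
  then show ?thesis by (auto simp: contains_type_def)
qed

lemma freq_kind: "freq r OneP = card {s \<in> seven_sets r. \<exists>h. h \<subseteq> s \<and> card h = 5 \<and> (\<exists>a. has_n_of_rank 2 a h)}"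
  "freq r ThreeX = card {s \<in> seven_sets r. \<exists>h. h \<subseteq> s \<and> card h = 5 \<and> (\<exists>a. has_n_of_rank 3 a h)}"
  "freq r FourX = card {s \<in> seven_sets r. \<exists>h. h \<subseteq> s \<and> card h = 5 \<and> (\<exists>a. has_n_of_rank 4 a h)}"
  by (simp_all add: freq_def contains_type_def)

lemma c_SF_ST: "r \<ge> 7 \<Longrightarrow> freq r SF < freq r ST"
  by (rule strict_of[where w = w1]) (auto intro: mono_SF_ST w_seven w1_ST dest: mono_SF_FL simp: w1_noFL)

lemma c_FH_3X: "r \<ge> 7 \<Longrightarrow> freq r FH < freq r ThreeX"
  by (rule strict_of[where w = w2]) (auto intro: mono_FH_3X w_seven w2_3X simp: w2_noFH)

lemma c_2P_1P: "r \<ge> 7 \<Longrightarrow> freq r TwoP < freq r OneP"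
  by (rule strict_of[where w = w3]) (auto intro: mono_2P_1P w_seven w3_1P simp: w3_no2P)

lemma c_FL_HC: "r \<ge> 7 \<Longrightarrow> freq r FL < freq r HC"
  by (rule strict_of[where w = w1]) (auto intro: mono_HC w_seven w1_HC simp: w1_noFL)

lemma c_ST_4X: assumes r: "r \<ge> 761" shows "freq r ST < freq r FourX"
proof -
  define x where "x = real r"
  have x: "x \<ge> 761" using r x_def by simp
  have "real_of_int (int (freq r ST)) \<le> real_of_int (covc 7 5 r + int (r-4) * covc 7 5 (r-1))"
    using st_upper[of r] r by (simp only: of_int_le_iff)
  also have "\<dots> = covp x + (x - 4) * covp (x - 1)"
    using covc75[of r] covc75[of "r-1"] r by (simp add: x_def of_nat_diff)
  finally have u: "real (freq r ST) \<le> covp x + (x - 4) * covp (x - 1)" by simp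
  have l: "real (r * ((4*r-4) choose 3)) = x * ((4*x-4)*(4*x-5)*(4*x-6)/6)"
    using r by (simp add: ch3 of_nat_diff x_def algebra_simps)
  have "real (r * ((4*r-4) choose 3)) \<le> real (freq r FourX)" using fourx_lower[of r] by (simp only: of_nat_le_iff)
  then have "real (freq r ST) < real (freq r FourX)" using u l arA[OF x] by (simp add: covp_def)
  then show ?thesis by simp
qed

lemma c_4X_FH: assumes r: "r \<ge> 761" shows "freq r FourX < freq r FH"
proof -
  define x where "x = real r"
  have x: "x \<ge> 761" using r x_def by simp
  have "freq r FourX \<le> r * ((4 choose 4) * (4*r choose (7-4)))" unfolding freq_kind by (rule kind_upper) auto
  then have "freq r FourX \<le> r * ((4 choose 4) * (4*r choose 3))" by simp
  then have "real (freq r FourX) \<le> real (r * ((4 choose 4) * (4*r choose 3)))" by (simp only: of_nat_le_iff)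
  also have "\<dots> = x * ((4*x)*(4*x-1)*(4*x-2)/6)" by (simp add: ch3 x_def)
  finally have u: "real (freq r FourX) \<le> x * ((4*x)*(4*x-1)*(4*x-2)/6)" .
  have "real (r * (r - 1) * (4 * (6 * (((r - 2) choose 2) * 16)))) \<le> real (freq r FH)"
    using fh_lower[of r] by (simp only: of_nat_le_iff)
  moreover have "real (r * (r - 1) * (4 * (6 * (((r - 2) choose 2) * 16)))) = x * (x-1) * (384 * ((x-2)*(x-3)/2))"
    using r by (simp add: ch2 of_nat_diff x_def)
  ultimately have l: "x * (x-1) * (384 * ((x-2)*(x-3)/2)) \<le> real (freq r FH)" by simp
  have "x * ((4*x)*(4*x-1)*(4*x-2)/6) < x * (x-1) * (384 * ((x-2)*(x-3)/2))" using arB[OF x] by simp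
  then have "real (freq r FourX) < real (freq r FH)" using u l by linarith
  then show ?thesis by simp
qed

lemma c_3X_2P: assumes r: "r \<ge> 761" shows "freq r ThreeX < freq r TwoP"
proof -
  define x where "x = real r"
  have x: "x \<ge> 761" using r x_def by simp
  have "freq r ThreeX \<le> r * ((4 choose 3) * (4*r choose (7-3)))" unfolding freq_kind by (rule kind_upper) auto
  then have "freq r ThreeX \<le> r * ((4 choose 3) * (4*r choose 4))" by simp
  then have "real (freq r ThreeX) \<le> real (r * ((4 choose 3) * (4*r choose 4)))" by (simp only: of_nat_le_iff)
  also have "\<dots> = x * (4 * ((4*x)*(4*x-1)*(4*x-2)*(4*x-3)/24))" by (simp add: ch4 x_def)
  finally have u: "real (freq r ThreeX) \<le> x * (4 * ((4*x)*(4*x-1)*(4*x-2)*(4*x-3)/24))" .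
  have "real ((r choose 2) * (6 * (6 * (((r - 2) choose 3) * 64)))) \<le> real (freq r TwoP)"
    using twop_lower[of r] by (simp only: of_nat_le_iff)
  moreover have "real ((r choose 2) * (6 * (6 * (((r - 2) choose 3) * 64)))) = (x*(x-1)/2) * (2304 * ((x-2)*(x-3)*(x-4)/6))"
    using r by (simp add: ch2 ch3 of_nat_diff x_def)
  ultimately have l: "(x*(x-1)/2) * (2304 * ((x-2)*(x-3)*(x-4)/6)) \<le> real (freq r TwoP)" by simp
  have "x * (4 * ((4*x)*(4*x-1)*(4*x-2)*(4*x-3)/24)) < (x*(x-1)/2) * (2304 * ((x-2)*(x-3)*(x-4)/6))"
    using arC[OF x] by (simp add: field_simps)
  then have "real (freq r ThreeX) < real (freq r TwoP)" using u l by linarith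
  then show ?thesis by simp
qed

lemma c_1P_FL: assumes r: "r \<ge> 761" shows "freq r OneP < freq r FL"
proof -
  define x where "x = real r"
  have x: "x \<ge> 761" using r x_def by simp
  have "freq r OneP \<le> r * ((4 choose 2) * (4*r choose (7-2)))" unfolding freq_kind by (rule kind_upper) auto
  then have "freq r OneP \<le> r * ((4 choose 2) * (4*r choose 5))" by simp
  then have "real (freq r OneP) \<le> real (r * ((4 choose 2) * (4*r choose 5)))" by (simp only: of_nat_le_iff)
  also have "\<dots> = x * (6 * ((4*x)*(4*x-1)*(4*x-2)*(4*x-3)*(4*x-4)/120))" by (simp add: ch5 x_def)
  finally have u: "real (freq r OneP) \<le> x * (6 * ((4*x)*(4*x-1)*(4*x-2)*(4*x-3)*(4*x-4)/120))" .
  have "real (4 * ((r choose 5) * ((3*r) choose 2))) \<le> real (freq r FL)"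
    using fl_lower[of r] by (simp only: of_nat_le_iff)
  moreover have "real (4 * ((r choose 5) * ((3*r) choose 2))) = 4 * ((x*(x-1)*(x-2)*(x-3)*(x-4)/120) * ((3*x)*(3*x-1)/2))"
    by (simp add: ch2 ch5 x_def)
  ultimately have l: "4 * ((x*(x-1)*(x-2)*(x-3)*(x-4)/120) * ((3*x)*(3*x-1)/2)) \<le> real (freq r FL)" by simp
  have "x * (6 * ((4*x)*(4*x-1)*(4*x-2)*(4*x-3)*(4*x-4)/120)) < 4 * ((x*(x-1)*(x-2)*(x-3)*(x-4)/120) * ((3*x)*(3*x-1)/2))"
    using arD[OF x] by (simp add: field_simps)
  then have "real (freq r OneP) < real (freq r FL)" using u l by linarith
  then show ?thesis by simp
qed

fun pos :: "hand_type \<Rightarrow> nat" where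
  "pos SF = 0" | "pos ST = 1" | "pos FourX = 2" | "pos FH = 3" | "pos ThreeX = 4"
| "pos TwoP = 5" | "pos OneP = 6" | "pos FL = 7" | "pos HC = 8"

lemma key: assumes r: "r \<ge> 761" shows "freq r h < freq r h' \<longleftrightarrow> pos h < pos h'"
proof -
  have r7: "r \<ge> 7" using r by simp
  note c = c_SF_ST[OF r7] c_ST_4X[OF r] c_4X_FH[OF r] c_FH_3X[OF r7] c_3X_2P[OF r]
    c_2P_1P[OF r7] c_1P_FL[OF r] c_FL_HC[OF r7]
  show ?thesis using c by (cases h; cases h') auto
qed

theorem fact3:
  fixes r r' :: nat and h h' :: hand_type
  assumes "r \<ge> 761" and "r' \<ge> 761"
  shows "freq r h < freq r h' \<longleftrightarrow> freq r' h < freq r' h'"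
  using key[OF assms(1)] key[OF assms(2)] by simp

end
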